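(* Let $X$ be an extremally disconnected topological space satisfying $S_1(s\mathcal{O},s\mathcal{O})$ (i.e. $X$ is semi-Rothberger). Then Alice does not have a winning strategy in the game $G_1(s\mathcal{O},s\mathcal{O})$ played on $X$.
   Context: A subset $A$ of a topological space $X$ is semi-open if $A\subseteq \mathrm{Cl}(\mathrm{Int}(A))$; a semi-open cover is a cover by semi-open sets. A space is extremally disconnected if the closure of every open set is open. $X$ satisfies $S_1(s\mathcal{O},s\mathcal{O})$ if for each sequence $\langle\mathcal{U}_n:n\in\omega\rangle$ of semi-open covers of $X$ there are $U_n\in\mathcal{U}_n$ with $\{U_n:n\in\omega\}$ covering $X$. The game $G_1(s\mathcal{O},s\mathcal{O})$ is played by Alice and Bob in innings $n\in\omega$: in inning $n$ Alice chooses a semi-open cover $\mathcal{U}_n$ of $X$ and Bob chooses one element $U_n\in\mathcal{U}_n$; Bob wins if $\{U_n:n\in\omega\}$ covers $X$, otherwise Alice wins. A strategy for Alice assigns to each finite sequence of Bob's previous moves a semi-open cover of $X$; it is winning if Alice wins every play following it. *)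

theory Defs
  imports "HOL-Analysis.Analysis"
begin

definition semi_open_in :: "'a topology \<Rightarrow> 'a set \<Rightarrow> bool" where
  "semi_open_in X A \<longleftrightarrow> A \<subseteq> topspace X \<and> A \<subseteq> X closure_of (X interior_of A)"

definition semi_open_cover :: "'a topology \<Rightarrow> 'a set set \<Rightarrow> bool" where
  "semi_open_cover X \<U> \<longleftrightarrow> (\<forall>U\<in>\<U>. semi_open_in X U) \<and> \<Union>\<U> = topspace X"

definition extremally_disconnected :: "'a topology \<Rightarrow> bool" where
  "extremally_disconnected X \<longleftrightarrow> (\<forall>U. openin X U \<longrightarrow> openin X (X closure_of U))"

definition semi_Rothberger :: "'a topology \<Rightarrow> bool" where
  "semi_Rothberger X \<longleftrightarrow>
     (\<forall>\<U> :: nat \<Rightarrow> 'a set set. (\<forall>n. semi_open_cover X (\<U> n)) \<longrightarrow>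
        (\<exists>U :: nat \<Rightarrow> 'a set. (\<forall>n. U n \<in> \<U> n) \<and> (\<Union>n. U n) = topspace X))"

text \<open>A strategy for Alice maps the finite list of Bob's previous moves
  (in order, innings 0..n-1) to a semi-open cover.\<close>
definition alice_strategy :: "'a topology \<Rightarrow> ('a set list \<Rightarrow> 'a set set) \<Rightarrow> bool" where
  "alice_strategy X \<sigma> \<longleftrightarrow> (\<forall>s. semi_open_cover X (\<sigma> s))"

definition play_follows :: "('a set list \<Rightarrow> 'a set set) \<Rightarrow> (nat \<Rightarrow> 'a set) \<Rightarrow> bool" where
  "play_follows \<sigma> U \<longleftrightarrow> (\<forall>n. U n \<in> \<sigma> (map U [0..<n]))"

definition alice_winning_strategy :: "'a topology \<Rightarrow> ('a set list \<Rightarrow> 'a set set) \<Rightarrow> bool" where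
  "alice_winning_strategy X \<sigma> \<longleftrightarrow> alice_strategy X \<sigma> \<and>
     (\<forall>U. play_follows \<sigma> U \<longrightarrow> (\<Union>n. U n) \<noteq> topspace X)"

end

theory Submission
  imports Defs
begin

lemma so_Union:
  assumes "\<And>A. A \<in> \<A> \<Longrightarrow> semi_open_in X A"
  shows "semi_open_in X (\<Union>\<A>)"
  unfolding semi_open_in_def
proof
  show "\<Union>\<A> \<subseteq> topspace X" using assms by (auto simp: semi_open_in_def)
  show "\<Union>\<A> \<subseteq> X closure_of X interior_of \<Union>\<A>"
  proof
    fix x assume "x \<in> \<Union>\<A>"
    then obtain A where A: "A \<in> \<A>" "x \<in> A" by blast
    then have "x \<in> X closure_of X interior_of A" using assms by (auto simp: semi_open_in_def)
    moreover have "X closure_of X interior_of A \<subseteq> X closure_of X interior_of \<Union>\<A>"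
      by (intro closure_of_mono interior_of_mono) (use A in blast)
    ultimately show "x \<in> X closure_of X interior_of \<Union>\<A>" by blast
  qed
qed

lemma so_topspace: "semi_open_in X (topspace X)"
  unfolding semi_open_in_def
  by (simp add: closure_of_topspace interior_of_openin)

lemma so_Int:
  assumes ed: "extremally_disconnected X" and A: "semi_open_in X A" and B: "semi_open_in X B"
  shows "semi_open_in X (A \<inter> B)"
proof -
  let ?P = "X interior_of A" and ?Q = "X interior_of B"
  have oP: "openin X (X closure_of ?P)" using ed by (simp add: extremally_disconnected_def)
  have "X closure_of ?P \<inter> X closure_of ?Q \<subseteq> X closure_of (X closure_of ?P \<inter> ?Q)"
    by (rule openin_Int_closure_of_subset[OF oP])
  also have "\<dots> \<subseteq> X closure_of (X closure_of (?Q \<inter> ?P))"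
    using openin_Int_closure_of_subset[of X ?Q ?P]
    by (intro closure_of_mono) (simp add: Int_commute)
  also have "\<dots> = X closure_of (X interior_of (A \<inter> B))"
    by (simp add: interior_of_Int Int_commute)
  finally have *: "X closure_of ?P \<inter> X closure_of ?Q \<subseteq> X closure_of X interior_of (A \<inter> B)" .
  show ?thesis using A B * by (auto simp: semi_open_in_def)
qed

lemma so_Inter_fin:
  assumes ed: "extremally_disconnected X" and "finite F" and "\<And>A. A \<in> F \<Longrightarrow> semi_open_in X A"
  shows "semi_open_in X (topspace X \<inter> \<Inter>F)"
  using assms(2,3)
proof (induction F rule: finite_induct)
  case empty then show ?case by (simp add: so_topspace)
next
  case (insert A F)
  have "topspace X \<inter> \<Inter>(insert A F) = A \<inter> (topspace X \<inter> \<Inter>F)" by auto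
  then show ?case using insert so_Int[OF ed] by auto
qed

lemma pow2_sum_less: "(\<Sum>i<k. (2::nat)^i) < 2^k"
  by (induction k) auto

locale gsetup =
  fixes X :: "'a topology" and e :: "'a set list \<Rightarrow> nat \<Rightarrow> 'a set"
  assumes ed: "extremally_disconnected X"
    and rot: "semi_Rothberger X"
    and e_so: "\<And>p n. semi_open_in X (e p n)"
    and e_cov: "\<And>p. (\<Union>n. e p n) = topspace X"
begin

definition pos :: "nat list \<Rightarrow> 'a set list" where
  "pos t = foldl (\<lambda>p k. p @ [e p k]) [] t"

lemma pos_snoc: "pos (t @ [k]) = pos t @ [e (pos t) k]"
  by (simp add: pos_def)

definition Ut :: "nat list \<Rightarrow> nat \<Rightarrow> 'a set" where
  "Ut t k = e (pos t) k"

definition mu :: "'a \<Rightarrow> nat list \<Rightarrow> nat" where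
  "mu x t = (LEAST k. x \<in> Ut t k)"

lemma Ut_so: "semi_open_in X (Ut t k)"
  by (simp add: Ut_def e_so)

lemma Ut_sub: "Ut t k \<subseteq> topspace X"
  using Ut_so by (simp add: semi_open_in_def)

lemma mu_spec: "x \<in> topspace X \<Longrightarrow> x \<in> Ut t (mu x t)"
  unfolding mu_def
  by (rule LeastI_ex) (use e_cov[of "pos t"] in \<open>auto simp: Ut_def\<close>)

lemma mu_le: "x \<in> Ut t j \<Longrightarrow> mu x t \<le> j"
  unfolding mu_def by (rule Least_le)

lemma rot_sel:
  fixes \<U> :: "nat \<Rightarrow> 'a set set"
  assumes "\<And>n. \<forall>U\<in>\<U> n. semi_open_in X U" "\<And>n. \<Union>(\<U> n) = topspace X"
  shows "\<exists>U. (\<forall>n. U n \<in> \<U> n) \<and> (\<Union>n. U n) = topspace X"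
proof -
  have "\<forall>n. semi_open_cover X (\<U> n)" using assms by (simp add: semi_open_cover_def)
  then show ?thesis using rot[unfolded semi_Rothberger_def, rule_format, of \<U>] by simp
qed

definition Tb :: "(nat \<Rightarrow> nat) \<Rightarrow> nat \<Rightarrow> nat list set" where
  "Tb b m = {t. length t = m \<and> (\<forall>i<m. t!i \<le> b i)}"

definition good :: "(nat \<Rightarrow> nat) \<Rightarrow> 'a \<Rightarrow> nat \<Rightarrow> bool" where
  "good b x m = (\<forall>t\<in>Tb b m. mu x t \<le> b m)"

lemma finite_Tb: "finite (Tb b m)"
proof -
  let ?B = "\<Sum>i<m. b i"
  have "Tb b m \<subseteq> {xs. set xs \<subseteq> {0..?B} \<and> length xs \<le> m}"
  proof
    fix t assume t: "t \<in> Tb b m"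
    have "set t \<subseteq> {0..?B}"
    proof
      fix y assume "y \<in> set t"
      then obtain i where i: "i < length t" "y = t!i" by (auto simp: in_set_conv_nth)
      then have "y \<le> b i" using t by (auto simp: Tb_def)
      also have "b i \<le> ?B" using i t by (intro member_le_sum) (auto simp: Tb_def)
      finally show "y \<in> {0..?B}" by simp
    qed
    then show "t \<in> {xs. set xs \<subseteq> {0..?B} \<and> length xs \<le> m}" using t by (auto simp: Tb_def)
  qed
  then show ?thesis by (rule finite_subset) (rule finite_lists_length_le, simp)
qed

lemma phase2:
  assumes inf: "\<forall>x\<in>topspace X. infinite {m. good b x m}"
  shows "\<exists>f. \<forall>x\<in>topspace X. \<exists>n. x \<in> Ut (map f [0..<n]) (f n)"
proof -
  define S where "S = topspace X"
  define V where "V m \<phi> = S \<inter> \<Inter>((\<lambda>t. Ut t (\<phi> t)) ` Tb b m)" for m \<phi>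
  have soV: "semi_open_in X (V m \<phi>)" for m \<phi>
    unfolding V_def S_def using finite_Tb by (intro so_Inter_fin[OF ed]) (auto simp: Ut_so)
  define C where "C k = {S \<inter> \<Inter>((\<lambda>m. V m (\<psi> m)) ` D) | D \<psi>. finite D \<and> card D = 2^k \<and>
     (\<forall>m\<in>D. \<forall>t\<in>Tb b m. \<psi> m t \<le> b m)}" for k
  have C1: "\<forall>U\<in>C k. semi_open_in X U" for k
  proof
    fix U assume "U \<in> C k"
    then obtain D \<psi> where U: "U = S \<inter> \<Inter>((\<lambda>m. V m (\<psi> m)) ` D)" "finite D"
      unfolding C_def by blast
    show "semi_open_in X U" unfolding U(1) S_def
      by (rule so_Inter_fin[OF ed]) (use U(2) soV in auto)
  qed
  have C2: "\<Union>(C k) = S" for k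
  proof
    show "\<Union>(C k) \<subseteq> S" unfolding C_def by auto
    show "S \<subseteq> \<Union>(C k)"
    proof
      fix x assume x: "x \<in> S"
      obtain D where D: "finite D" "card D = 2^k" "D \<subseteq> {m. good b x m}"
        using infinite_arbitrarily_large inf x S_def by blast
      have xin: "x \<in> V m (mu x)" if "m \<in> D" for m
        using x mu_spec unfolding V_def S_def by blast
      have bnd: "\<forall>m\<in>D. \<forall>t\<in>Tb b m. mu x t \<le> b m" using D(3) by (auto simp: good_def)
      have mem: "S \<inter> \<Inter>((\<lambda>m. V m (mu x)) ` D) \<in> C k"
        unfolding C_def
        by (rule CollectI, rule exI[of _ D], rule exI[of _ "\<lambda>m. mu x"]) (use D bnd in simp)
      have "x \<in> S \<inter> \<Inter>((\<lambda>m. V m (mu x)) ` D)" using x xin by blast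
      then show "x \<in> \<Union>(C k)" using mem by blast
    qed
  qed
  have "\<exists>W. (\<forall>k. W k \<in> C k) \<and> (\<Union>k. W k) = topspace X"
    by (rule rot_sel) (use C1 C2 S_def in auto)
  then obtain W where W: "\<forall>k. W k \<in> C k" "(\<Union>k. W k) = S"
    unfolding S_def by blast
  have "\<forall>k. \<exists>p. W k = S \<inter> \<Inter>((\<lambda>m. V m (snd p m)) ` fst p) \<and> finite (fst p) \<and> card (fst p) = 2^k \<and>
     (\<forall>m\<in>fst p. \<forall>t\<in>Tb b m. snd p m t \<le> b m)"
  proof
    fix k
    have "W k \<in> C k" using W(1) by blast
    then obtain D \<psi> where "W k = S \<inter> \<Inter>((\<lambda>m. V m (\<psi> m)) ` D)" "finite D" "card D = 2^k"
      "\<forall>m\<in>D. \<forall>t\<in>Tb b m. \<psi> m t \<le> b m" unfolding C_def mem_Collect_eq by (elim exE conjE) blast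
    then show "\<exists>p. W k = S \<inter> \<Inter>((\<lambda>m. V m (snd p m)) ` fst p) \<and> finite (fst p) \<and> card (fst p) = 2^k \<and>
     (\<forall>m\<in>fst p. \<forall>t\<in>Tb b m. snd p m t \<le> b m)" by (intro exI[of _ "(D,\<psi>)"]) simp
  qed
  then have "\<exists>p. \<forall>k. W k = S \<inter> \<Inter>((\<lambda>m. V m (snd (p k) m)) ` fst (p k)) \<and> finite (fst (p k)) \<and> card (fst (p k)) = 2^k \<and>
     (\<forall>m\<in>fst (p k). \<forall>t\<in>Tb b m. snd (p k) m t \<le> b m)" by (rule choice)
  then obtain p where pall: "\<forall>k. W k = S \<inter> \<Inter>((\<lambda>m. V m (snd (p k) m)) ` fst (p k)) \<and> finite (fst (p k)) \<and> card (fst (p k)) = 2^k \<and>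
     (\<forall>m\<in>fst (p k). \<forall>t\<in>Tb b m. snd (p k) m t \<le> b m)" by (elim exE)
  have p1: "W k = S \<inter> \<Inter>((\<lambda>m. V m (snd (p k) m)) ` fst (p k))" for k using pall by simp
  have p2: "finite (fst (p k))" for k using pall by simp
  have p3: "card (fst (p k)) = 2^k" for k using pall by simp
  have p4: "snd (p k) m t \<le> b m" if "m \<in> fst (p k)" "t \<in> Tb b m" for k m t using pall that by blast
  define DD where "DD k = fst (p k)" for k
  define PP where "PP k = snd (p k)" for k
  define phi where "phi m = (if \<exists>k. m \<in> DD k then PP (LEAST k. m \<in> DD k) m else (\<lambda>_. 0))" for m
  define pre where "pre = rec_nat [] (\<lambda>n q. q @ [phi n q])"
  have pre0: "pre 0 = []" and preS: "pre (Suc n) = pre n @ [phi n (pre n)]" for n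
    by (simp_all add: pre_def)
  define f where "f n = phi n (pre n)" for n
  have mapf: "map f [0..<n] = pre n" for n
    by (induction n) (simp_all add: pre0 preS f_def)
  have preT: "pre n \<in> Tb b n" for n
  proof (induction n)
    case 0 then show ?case by (simp add: pre0 Tb_def)
  next
    case (Suc n)
    have "phi n (pre n) \<le> b n"
    proof (cases "\<exists>k. n \<in> DD k")
      case True
      then have "n \<in> DD (LEAST k. n \<in> DD k)" by (rule LeastI_ex)
      then show ?thesis using True Suc p4 by (simp add: phi_def DD_def PP_def)
    next
      case False then show ?thesis by (simp add: phi_def)
    qed
    then show ?case using Suc by (auto simp: preS Tb_def nth_append less_Suc_eq)
  qed
  have "\<exists>n. x \<in> Ut (map f [0..<n]) (f n)" if x: "x \<in> S" for x
  proof -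
    obtain k where k: "x \<in> W k" using W(2) x by blast
    have "\<exists>m\<in>DD k. (LEAST k'. m \<in> DD k') = k"
    proof (rule ccontr)
      assume nc: "\<not> (\<exists>m\<in>DD k. (LEAST k'. m \<in> DD k') = k)"
      have "DD k \<subseteq> (\<Union>k'<k. DD k')"
      proof -
        { fix m assume m: "m \<in> DD k"
          then have "(LEAST k'. m \<in> DD k') \<le> k" by (rule Least_le)
          moreover have "(LEAST k'. m \<in> DD k') \<noteq> k" using m nc by blast
          moreover have "m \<in> DD (LEAST k'. m \<in> DD k')" using m by (rule LeastI)
          ultimately have "m \<in> (\<Union>k'<k. DD k')" by auto }
        then show ?thesis by blast
      qed
      then have "card (DD k) \<le> card (\<Union>k'<k. DD k')"
        by (rule card_mono[rotated]) (simp add: DD_def p2)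
      also have "\<dots> \<le> (\<Sum>k'<k. card (DD k'))" by (rule card_UN_le) simp
      also have "\<dots> = (\<Sum>k'<k. 2^k')" by (simp add: DD_def p3)
      also have "\<dots> < 2^k" by (rule pow2_sum_less)
      finally show False by (simp add: DD_def p3)
    qed
    then obtain m where m: "m \<in> DD k" "(LEAST k'. m \<in> DD k') = k" by blast
    have phim: "phi m = PP k m" using m by (auto simp: phi_def)
    have "x \<in> V m (PP k m)" using k m by (auto simp: p1 DD_def PP_def)
    then have "x \<in> Ut (pre m) (PP k m (pre m))" using preT[of m] by (auto simp: V_def)
    then show ?thesis using phim mapf[of m] by (intro exI[of _ m]) (simp add: f_def)
  qed
  then show ?thesis unfolding S_def by blast
qed


definition box :: "nat \<Rightarrow> nat list set" where
  "box B = {t. set t \<subseteq> {0..B} \<and> length t \<le> B}"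

lemma finite_box: "finite (box B)"
  unfolding box_def by (rule finite_lists_length_le) simp

lemma box_mono: "B \<le> B' \<Longrightarrow> box B \<subseteq> box B'"
  unfolding box_def by auto

definition h :: "'a \<Rightarrow> nat \<Rightarrow> nat" where
  "h x B = Max (insert B (mu x ` box B))"

lemma h_le_iff: "h x B \<le> M \<longleftrightarrow> B \<le> M \<and> (\<forall>t\<in>box B. mu x t \<le> M)"
  unfolding h_def using finite_box by (subst Max_le_iff) auto

lemma h_ge: "B \<le> h x B"
  using h_le_iff[of x B "h x B"] by simp

lemma h_mu: "t \<in> box B \<Longrightarrow> mu x t \<le> h x B"
  using h_le_iff[of x B "h x B"] by simp

lemma h_mono: "B \<le> B' \<Longrightarrow> h x B \<le> h x B'"
  unfolding h_le_iff using h_ge[of B' x] box_mono[of B B'] h_mu[of _ B' x] by auto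

lemma mu_le_iff: "x \<in> topspace X \<Longrightarrow> mu x t \<le> M \<longleftrightarrow> (\<exists>j\<le>M. x \<in> Ut t j)"
  using mu_spec[of x t] mu_le[of x t] by (auto intro: order_trans)

definition L :: "nat \<Rightarrow> nat \<Rightarrow> 'a set" where
  "L B M = {x\<in>topspace X. h x B \<le> M}"

lemma so_L: "semi_open_in X (L B M)"
proof (cases "B \<le> M")
  case True
  have eq: "L B M = topspace X \<inter> \<Inter>((\<lambda>t. \<Union>((\<lambda>j. Ut t j) ` {..M})) ` box B)"
  proof (intro set_eqI iffI)
    fix x assume x: "x \<in> L B M"
    then have "x \<in> topspace X" "\<forall>t\<in>box B. mu x t \<le> M" by (auto simp: L_def h_le_iff)
    then show "x \<in> topspace X \<inter> \<Inter>((\<lambda>t. \<Union>((\<lambda>j. Ut t j) ` {..M})) ` box B)"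
      using mu_le_iff by auto
  next
    fix x assume x: "x \<in> topspace X \<inter> \<Inter>((\<lambda>t. \<Union>((\<lambda>j. Ut t j) ` {..M})) ` box B)"
    then have "\<forall>t\<in>box B. mu x t \<le> M" using mu_le_iff by auto
    then show "x \<in> L B M" using x True by (auto simp: L_def h_le_iff)
  qed
  show ?thesis unfolding eq
    by (rule so_Inter_fin[OF ed]) (auto simp: finite_box intro!: so_Union Ut_so)
next
  case False
  have "\<forall>x. \<not> h x B \<le> M" using False h_ge le_trans by blast
  then have "L B M = \<Union>{}" by (simp add: L_def)
  then show ?thesis by (metis empty_iff so_Union)
qed

definition G :: "nat \<Rightarrow> nat \<Rightarrow> 'a set" where
  "G k M = {x\<in>topspace X. h x (h x k) \<le> M}"

lemma so_G: "semi_open_in X (G k M)"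
proof -
  have "G k M = \<Union>((\<lambda>c. L k c \<inter> L c M) ` UNIV)"
  proof (intro set_eqI iffI)
    fix x assume "x \<in> G k M"
    then show "x \<in> \<Union>((\<lambda>c. L k c \<inter> L c M) ` UNIV)"
      by (auto simp: G_def L_def intro!: exI[of _ "h x k"])
  next
    fix x assume "x \<in> \<Union>((\<lambda>c. L k c \<inter> L c M) ` UNIV)"
    then obtain c where "x \<in> topspace X" "h x k \<le> c" "h x c \<le> M" by (auto simp: L_def)
    then show "x \<in> G k M" using h_mono[of "h x k" c x] by (auto simp: G_def)
  qed
  then show ?thesis by (simp only:) (rule so_Union, auto intro: so_Int[OF ed] so_L)
qed

lemma phase1: "\<exists>b. \<forall>x\<in>topspace X. infinite {m. good b x m}"
proof -
  define S where "S = topspace X"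
  have "\<forall>K. \<exists>Mf. \<forall>x\<in>S. \<exists>n. x \<in> G (n+K) (Mf n)"
  proof
    fix K
    have "\<exists>W. (\<forall>n. W n \<in> range (G (n+K))) \<and> (\<Union>n. W n) = topspace X"
    proof (rule rot_sel)
      show "\<forall>U\<in>range (G (n+K)). semi_open_in X U" for n using so_G by auto
      show "\<Union>(range (G (n+K))) = topspace X" for n
      proof
        show "\<Union>(range (G (n+K))) \<subseteq> topspace X" by (auto simp: G_def)
        show "topspace X \<subseteq> \<Union>(range (G (n+K)))"
          by (auto simp: G_def intro!: exI[of _ "h _ (h _ (n+K))"])
      qed
    qed
    then obtain W where W: "\<forall>n. W n \<in> range (G (n+K))" "(\<Union>n. W n) = topspace X" by blast
    have "\<forall>n. \<exists>m. W n = G (n+K) m" using W(1) by auto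
    then obtain Mf where "\<forall>n. W n = G (n+K) (Mf n)" by (rule choice[THEN exE])
    then have Mf: "\<And>n. W n = G (n+K) (Mf n)" by blast
    show "\<exists>Mf. \<forall>x\<in>S. \<exists>n. x \<in> G (n+K) (Mf n)"
    proof (intro exI[of _ Mf] ballI)
      fix x assume "x \<in> S"
      then obtain n where "x \<in> W n" using W(2) S_def by blast
      then show "\<exists>n. x \<in> G (n+K) (Mf n)" using Mf by auto
    qed
  qed
  then obtain MF where MF: "\<forall>K. \<forall>x\<in>S. \<exists>n. x \<in> G (n+K) (MF K n)" by (rule choice[THEN exE])
  define M where "M k = Max ((\<lambda>K. MF K (k-K)) ` {..k})" for k
  have Mgood: "\<exists>k\<ge>K. h x (h x k) \<le> M k" if x: "x \<in> S" for x K
  proof -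
    obtain n where "x \<in> G (n+K) (MF K n)" using MF x by blast
    then have "h x (h x (n+K)) \<le> MF K n" by (simp add: G_def)
    also have "MF K n \<le> M (n+K)" unfolding M_def by (rule Max_ge) (auto intro!: image_eqI[of _ _ K])
    finally show ?thesis by (intro exI[of _ "n+K"]) simp
  qed
  define b where "b = rec_nat 1 (\<lambda>n bn. max (bn+1) (Max (M ` {..bn})))"
  have b0: "b 0 = 1" and bS: "b (Suc n) = max (b n + 1) (Max (M ` {..b n}))" for n
    by (simp_all add: b_def)
  have b_lt: "b n < b (Suc n)" for n by (simp add: bS)
  have smono: "strict_mono b" by (rule strict_monoI_Suc) (rule b_lt)
  have bM: "M k \<le> b (Suc n)" if "k \<le> b n" for k n
  proof -
    have "M k \<le> Max (M ` {..b n})" by (rule Max_ge) (use that in auto)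
    then show ?thesis by (simp add: bS)
  qed
  have b_ge: "n < b n" for n
  proof (induction n)
    case 0 then show ?case by (simp add: b0)
  next
    case (Suc n) then show ?case using b_lt[of n] by linarith
  qed
  have interval: "b 0 \<le> k \<Longrightarrow> \<exists>n. b n \<le> k \<and> k < b (Suc n)" for k
  proof (induction k)
    case 0 then show ?case by (simp add: b0)
  next
    case (Suc k)
    show ?case
    proof (cases "b 0 \<le> k")
      case True
      then obtain n where n: "b n \<le> k" "k < b (Suc n)" using Suc by blast
      show ?thesis
      proof (cases "Suc k < b (Suc n)")
        case True then show ?thesis using n by (intro exI[of _ n]) simp
      next
        case False
        then have "Suc k = b (Suc n)" using n by simp
        then show ?thesis using b_lt[of "Suc n"] by (intro exI[of _ "Suc n"]) simp
      qed
    next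
      case False
      then have "Suc k = b 0" using Suc.prems by simp
      then show ?thesis using b_lt[of 0] by (intro exI[of _ 0]) simp
    qed
  qed
  have goodS: "good b x (Suc n)" if "h x (b n) \<le> b (Suc n)" for x n
    unfolding good_def
  proof
    fix t assume t: "t \<in> Tb b (Suc n)"
    have "t \<in> box (b n)"
      unfolding box_def
    proof (intro CollectI conjI subsetI)
      show "length t \<le> b n" using t b_ge[of n] by (simp add: Tb_def)
      fix y assume "y \<in> set t"
      then obtain i where i: "i < length t" "y = t!i" by (auto simp: in_set_conv_nth)
      then have "y \<le> b i" using t by (auto simp: Tb_def)
      also have "b i \<le> b n" using i t smono by (auto simp: Tb_def strict_mono_less_eq)
      finally show "y \<in> {0..b n}" by simp
    qed
    then have "mu x t \<le> h x (b n)" by (rule h_mu)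
    then show "mu x t \<le> b (Suc n)" using that by simp
  qed
  have "infinite {m. good b x m}" if x: "x \<in> S" for x
    unfolding infinite_nat_iff_unbounded_le
  proof
    fix N
    obtain k where k: "k \<ge> b N" "h x (h x k) \<le> M k" using Mgood x by blast
    have "b 0 \<le> b N" using strict_mono_less_eq[OF smono, of 0 N] by simp
    then have "b 0 \<le> k" using k(1) by simp
    then obtain n where n: "b n \<le> k" "k < b (Suc n)" using interval by blast
    have "b N < b (Suc n)" using k(1) n(2) by simp
    then have Nn: "N \<le> n" using smono by (simp add: strict_mono_less)
    have Mk: "M k \<le> b (Suc (Suc n))" using n(2) by (intro bM) simp
    show "\<exists>m\<ge>N. m \<in> {m. good b x m}"
    proof (cases "h x (b n) \<le> b (Suc n)")
      case True then show ?thesis using goodS Nn by (intro exI[of _ "Suc n"]) auto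
    next
      case False
      then have "b (Suc n) \<le> h x k" using h_mono[of "b n" k x] n(1) by simp
      then have "h x (b (Suc n)) \<le> h x (h x k)" by (rule h_mono)
      then have "h x (b (Suc n)) \<le> b (Suc (Suc n))" using k(2) Mk by simp
      then show ?thesis using goodS Nn by (intro exI[of _ "Suc (Suc n)"]) auto
    qed
  qed
  then show ?thesis unfolding S_def by blast
qed

lemma main_path: "\<exists>f. \<forall>x\<in>topspace X. \<exists>n. x \<in> Ut (map f [0..<n]) (f n)"
  using phase1 phase2 by blast

end

theorem mainTheorem4:
  fixes X :: "'a topology"
  assumes "extremally_disconnected X"
    and "semi_Rothberger X"
  shows "\<not> (\<exists>\<sigma>. alice_winning_strategy X \<sigma>)"
proof
  assume "\<exists>\<sigma>. alice_winning_strategy X \<sigma>"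
  then obtain \<sigma> where "alice_winning_strategy X \<sigma>" by blast
  then have aw: "alice_strategy X \<sigma> \<and> (\<forall>U. play_follows \<sigma> U \<longrightarrow> (\<Union>n. U n) \<noteq> topspace X)"
    unfolding alice_winning_strategy_def by assumption
  have st: "\<forall>s. semi_open_cover X (\<sigma> s)" using aw[THEN conjunct1] unfolding alice_strategy_def by assumption
  have win: "\<forall>U. play_follows \<sigma> U \<longrightarrow> (\<Union>n. U n) \<noteq> topspace X" using aw by (rule conjunct2)
  have "\<forall>p. \<exists>E::nat \<Rightarrow> 'a set. (\<forall>n. E n \<in> \<sigma> p) \<and> (\<Union>n. E n) = topspace X"
  proof
    fix p
    have R: "\<forall>\<U>::nat \<Rightarrow> 'a set set. (\<forall>n. semi_open_cover X (\<U> n)) \<longrightarrow>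
        (\<exists>U. (\<forall>n. U n \<in> \<U> n) \<and> (\<Union>n. U n) = topspace X)"
      using assms(2) by (simp only: semi_Rothberger_def)
    have "(\<forall>n::nat. semi_open_cover X (\<sigma> p)) \<longrightarrow> (\<exists>U::nat \<Rightarrow> 'a set. (\<forall>n. U n \<in> \<sigma> p) \<and> (\<Union>n. U n) = topspace X)"
      using spec[OF R, of "\<lambda>_. \<sigma> p"] by simp
    moreover have "\<forall>n::nat. semi_open_cover X (\<sigma> p)" using st by simp
    ultimately show "\<exists>E::nat \<Rightarrow> 'a set. (\<forall>n. E n \<in> \<sigma> p) \<and> (\<Union>n. E n) = topspace X"
      by (rule mp)
  qed
  then have "\<exists>e::'a set list \<Rightarrow> nat \<Rightarrow> 'a set. \<forall>p. (\<forall>n. e p n \<in> \<sigma> p) \<and> (\<Union>n. e p n) = topspace X"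
    by (rule choice)
  then obtain e :: "'a set list \<Rightarrow> nat \<Rightarrow> 'a set" where e: "\<forall>p. (\<forall>n. e p n \<in> \<sigma> p) \<and> (\<Union>n. e p n) = topspace X"
    by (elim exE)
  interpret g: gsetup X e
  proof
    show "extremally_disconnected X" by (rule assms(1))
    show "semi_Rothberger X" by (rule assms(2))
    show "semi_open_in X (e p n)" for p n
    proof -
      have "e p n \<in> \<sigma> p" using e by simp
      moreover have "\<forall>U\<in>\<sigma> p. semi_open_in X U" using st by (simp add: semi_open_cover_def)
      ultimately show ?thesis by simp
    qed
    show "(\<Union>n. e p n) = topspace X" for p using e by simp
  qed
  obtain f where f: "\<forall>x\<in>topspace X. \<exists>n. x \<in> g.Ut (map f [0..<n]) (f n)"
    using g.main_path by blast
  define P where "P n = g.Ut (map f [0..<n]) (f n)" for n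
  have mp: "map P [0..<n] = g.pos (map f [0..<n])" for n
  proof (induction n)
    case 0 then show ?case by (simp add: g.pos_def)
  next
    case (Suc n)
    have "map P [0..<Suc n] = map P [0..<n] @ [P n]" by simp
    also have "\<dots> = g.pos (map f [0..<n]) @ [e (g.pos (map f [0..<n])) (f n)]"
    proof -
      have Pn: "P n = e (g.pos (map f [0..<n])) (f n)" by (simp add: P_def g.Ut_def)
      show ?thesis using Suc.IH Pn by simp
    qed
    also have "\<dots> = g.pos (map f [0..<n] @ [f n])" by (rule g.pos_snoc[symmetric])
    also have "\<dots> = g.pos (map f [0..<Suc n])" by simp
    finally show ?case .
  qed
  have "play_follows \<sigma> P"
    unfolding play_follows_def
  proof
    fix n
    have "P n = e (g.pos (map f [0..<n])) (f n)" by (simp add: P_def g.Ut_def)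
    then show "P n \<in> \<sigma> (map P [0..<n])" using e mp[of n] by simp
  qed
  moreover have "(\<Union>n. P n) = topspace X"
  proof
    show "(\<Union>n. P n) \<subseteq> topspace X" unfolding P_def using g.Ut_sub by blast
    show "topspace X \<subseteq> (\<Union>n. P n)" unfolding P_def using f by blast
  qed
  ultimately show False using win by simp
qed

end
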